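(* Under the hypotheses of the $O(\tau)$ convergence theorem, let $X:[0,\infty)\to\mathbb H$ be the limit of $\underline X_t^\tau$ as $\tau\downarrow0$. Then for all $0\le s\le t$ and all $\xi\in\mathbb H$, \[\frac12\Big(\|X(t)-\xi\|^2_{\mathbb H}-\|X(s)-\xi\|^2_{\mathbb H}\Big)+\frac\lambda2\int_s^t\|X(a)-\xi\|^2_{\mathbb H}\,da+\int_s^t\phi^{\#}_{\rho_0}(X(a))\,da\le(t-s)\,\phi^{\#}_{\rho_0}(\xi).\]
   Context: Hypotheses of the $O(\tau)$ convergence theorem: the standing hypotheses (S) below hold for every $\tau$ in a family $\tau\downarrow0$ (and $|\lambda|\tau<1$ if $\lambda<0$), with $\lim_{\tau\downarrow0}\|X_0^\tau-\mathrm{Id}\|_{\mathbb H}=0$ and $\sup_\tau\|\nabla\phi^{\#}_{\rho_0}(X_0^\tau)\|_{\mathbb H}<\infty$; $\underline X_t^\tau:=X_n^\tau$ for $t\in[n\tau,(n+1)\tau)$, and $\underline X^\tau$ converges locally uniformly in $\mathbb H$ to a locally Lipschitz curve $X$. Standing hypotheses (S): $\rho_0\in\mathcal P_2(\mathbb R^d)$; $\mathbb H=L^2(\mathbb R^d;\rho_0)$ is the Hilbert space of $\rho_0$-square-integrable maps $\mathbb R^d\to\mathbb R^d$; $\phi:\mathcal P_2(\mathbb R^d)\to\mathbb R$ has lift $\phi^{\#}_{\rho_0}(\xi):=\phi(\xi_{\#}\rho_0)$ which is Fréchet differentiable on $\mathbb H$ (gradient $\nabla\phi^{\#}_{\rho_0}$),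 $\lambda$-convex on $\mathbb H$ for some $\lambda\in\mathbb R$, and $\inf_{\mathbb H}\phi^{\#}_{\rho_0}>-\infty$; $\tau>0$ satisfies $\lambda/2+1/\tau>0$. Scheme: $X_{n+1}^\tau$ is the unique minimizer over $\xi\in\mathbb H$ of $\tfrac12\phi^{\#}_{\rho_0}(\xi)+\tfrac12\langle\nabla\phi^{\#}_{\rho_0}(X_n^\tau),\xi\rangle_{\mathbb H}+\tfrac1{2\tau}\|\xi-X_n^\tau\|^2_{\mathbb H}$. *)

theory Defs
  imports "HOL-Probability.Probability"
begin

definition P2 :: "'a::euclidean_space measure set" where
  "P2 = {M. prob_space M \<and> sets M = sets borel \<and> integrable M (\<lambda>x. (norm x)\<^sup>2)}"

text \<open>The Hilbert space H = L^2(R^d; rho0), represented by square integrable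
  Borel maps (elements equal rho0-a.e. are identified by the seminorm).\<close>
definition Hsp :: "'a::euclidean_space measure \<Rightarrow> ('a \<Rightarrow> 'a) set" where
  "Hsp \<rho> = {\<xi>. \<xi> \<in> borel_measurable \<rho> \<and> integrable \<rho> (\<lambda>x. (norm (\<xi> x))\<^sup>2)}"

definition Hinner :: "'a::euclidean_space measure \<Rightarrow> ('a \<Rightarrow> 'a) \<Rightarrow> ('a \<Rightarrow> 'a) \<Rightarrow> real" where
  "Hinner \<rho> \<xi> \<eta> = (\<integral>x. \<xi> x \<bullet> \<eta> x \<partial>\<rho>)"

definition Hnorm :: "'a::euclidean_space measure \<Rightarrow> ('a \<Rightarrow> 'a) \<Rightarrow> real" where
  "Hnorm \<rho> \<xi> = sqrt (\<integral>x. (norm (\<xi> x))\<^sup>2 \<partial>\<rho>)"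

definition lift :: "('a::euclidean_space measure \<Rightarrow> real) \<Rightarrow> 'a measure \<Rightarrow> ('a \<Rightarrow> 'a) \<Rightarrow> real" where
  "lift \<phi> \<rho> \<xi> = \<phi> (distr \<rho> borel \<xi>)"

definition H_frechet_gradient ::
  "'a::euclidean_space measure \<Rightarrow> (('a \<Rightarrow> 'a) \<Rightarrow> real) \<Rightarrow> (('a \<Rightarrow> 'a) \<Rightarrow> ('a \<Rightarrow> 'a)) \<Rightarrow> bool" where
  "H_frechet_gradient \<rho> F G \<longleftrightarrow>
     (\<forall>\<xi>\<in>Hsp \<rho>. G \<xi> \<in> Hsp \<rho> \<and>
        (\<forall>\<epsilon>>0. \<exists>\<delta>>0. \<forall>\<eta>\<in>Hsp \<rho>. Hnorm \<rho> (\<lambda>x. \<eta> x - \<xi> x) < \<delta> \<longrightarrow>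
            \<bar>F \<eta> - F \<xi> - Hinner \<rho> (G \<xi>) (\<lambda>x. \<eta> x - \<xi> x)\<bar>
              \<le> \<epsilon> * Hnorm \<rho> (\<lambda>x. \<eta> x - \<xi> x)))"

definition H_lambda_convex ::
  "'a::euclidean_space measure \<Rightarrow> real \<Rightarrow> (('a \<Rightarrow> 'a) \<Rightarrow> real) \<Rightarrow> bool" where
  "H_lambda_convex \<rho> lam F \<longleftrightarrow>
     (\<forall>\<xi>\<in>Hsp \<rho>. \<forall>\<eta>\<in>Hsp \<rho>. \<forall>t\<in>{0..1::real}.
        F (\<lambda>x. (1 - t) *\<^sub>R \<xi> x + t *\<^sub>R \<eta> x)
          \<le> (1 - t) * F \<xi> + t * F \<eta> - lam / 2 * t * (1 - t) * (Hnorm \<rho> (\<lambda>x. \<xi> x - \<eta> x))\<^sup>2)"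

definition scheme_obj ::
  "'a::euclidean_space measure \<Rightarrow> (('a \<Rightarrow> 'a) \<Rightarrow> real) \<Rightarrow> (('a \<Rightarrow> 'a) \<Rightarrow> ('a \<Rightarrow> 'a)) \<Rightarrow> real
     \<Rightarrow> ('a \<Rightarrow> 'a) \<Rightarrow> ('a \<Rightarrow> 'a) \<Rightarrow> real" where
  "scheme_obj \<rho> F G \<tau> Xn \<xi> =
     F \<xi> / 2 + Hinner \<rho> (G Xn) \<xi> / 2 + (Hnorm \<rho> (\<lambda>x. \<xi> x - Xn x))\<^sup>2 / (2 * \<tau>)"

end

theory Submission
  imports Defs
begin

lemma Hsp_meas: "u \<in> Hsp M \<Longrightarrow> u \<in> borel_measurable M"
  by (simp add: Hsp_def)

lemma Hsp_int: "u \<in> Hsp M \<Longrightarrow> integrable M (\<lambda>x. (norm (u x))\<^sup>2)"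
  by (simp add: Hsp_def)

lemma prod_le_sq_sum:
  fixes a b :: real assumes "a \<ge> 0" "b \<ge> 0" shows "a * b \<le> a\<^sup>2 + b\<^sup>2"
proof -
  have "0 \<le> (a - b)\<^sup>2" by simp
  then have "2 * (a * b) \<le> a\<^sup>2 + b\<^sup>2" by (simp add: power2_diff)
  moreover have "0 \<le> a * b" using assms by simp
  ultimately show ?thesis by linarith
qed

lemma Hsp_inner_int:
  assumes "u \<in> Hsp M" "v \<in> Hsp M"
  shows "integrable M (\<lambda>x. u x \<bullet> v x)"
proof (rule Bochner_Integration.integrable_bound)
  show "integrable M (\<lambda>x. (norm (u x))\<^sup>2 + (norm (v x))\<^sup>2)"
    using assms by (auto simp: Hsp_def)
  show "(\<lambda>x. u x \<bullet> v x) \<in> borel_measurable M"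
    using assms by (auto simp: Hsp_def)
  show "AE x in M. norm (u x \<bullet> v x) \<le> norm ((norm (u x))\<^sup>2 + (norm (v x))\<^sup>2)"
  proof (rule AE_I2)
    fix x
    have "\<bar>u x \<bullet> v x\<bar> \<le> norm (u x) * norm (v x)" by (rule Cauchy_Schwarz_ineq2)
    also have "\<dots> \<le> (norm (u x))\<^sup>2 + (norm (v x))\<^sup>2"
      by (rule prod_le_sq_sum) simp_all
    finally show "norm (u x \<bullet> v x) \<le> norm ((norm (u x))\<^sup>2 + (norm (v x))\<^sup>2)" by simp
  qed
qed

lemma Hsp_add[simp]:
  assumes "u \<in> Hsp M" "v \<in> Hsp M"
  shows "(\<lambda>x. u x + v x) \<in> Hsp M"
proof -
  have "integrable M (\<lambda>x. (norm (u x + v x))\<^sup>2)"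
  proof -
    have "(\<lambda>x. (norm (u x + v x))\<^sup>2) = (\<lambda>x. u x \<bullet> u x + 2 * (u x \<bullet> v x) + v x \<bullet> v x)"
      by (auto simp: power2_norm_eq_inner inner_add_left inner_add_right inner_commute fun_eq_iff)
    moreover have "integrable M (\<lambda>x. u x \<bullet> u x + 2 * (u x \<bullet> v x) + v x \<bullet> v x)"
      using Hsp_inner_int[OF assms(1) assms(1)] Hsp_inner_int[OF assms(1) assms(2)]
        Hsp_inner_int[OF assms(2) assms(2)] by auto
    ultimately show ?thesis by simp
  qed
  then show ?thesis using assms by (auto simp: Hsp_def)
qed

lemma Hsp_scale[simp]:
  assumes "u \<in> Hsp M"
  shows "(\<lambda>x. c *\<^sub>R u x) \<in> Hsp M"
proof -
  have "(\<lambda>x. (norm (c *\<^sub>R u x))\<^sup>2) = (\<lambda>x. c\<^sup>2 * (norm (u x))\<^sup>2)"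
    by (auto simp: power_mult_distrib)
  then show ?thesis using assms by (auto simp: Hsp_def)
qed

lemma Hsp_uminus[simp]:
  assumes "u \<in> Hsp M"
  shows "(\<lambda>x. - u x) \<in> Hsp M"
  using Hsp_scale[OF assms, of "-1"] by simp

lemma Hsp_diff[simp]:
  assumes "u \<in> Hsp M" "v \<in> Hsp M"
  shows "(\<lambda>x. u x - v x) \<in> Hsp M"
  using Hsp_add[OF assms(1) Hsp_uminus[OF assms(2)]] by simp

lemma Hinner_add_left[simp]:
  assumes "u \<in> Hsp M" "v \<in> Hsp M" "w \<in> Hsp M"
  shows "Hinner M (\<lambda>x. u x + v x) w = Hinner M u w + Hinner M v w"
  unfolding Hinner_def inner_add_left
  by (rule Bochner_Integration.integral_add; rule Hsp_inner_int; fact)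

lemma Hinner_diff_left[simp]:
  assumes "u \<in> Hsp M" "v \<in> Hsp M" "w \<in> Hsp M"
  shows "Hinner M (\<lambda>x. u x - v x) w = Hinner M u w - Hinner M v w"
  unfolding Hinner_def inner_diff_left
  by (rule Bochner_Integration.integral_diff; rule Hsp_inner_int; fact)

lemma Hinner_scale_left[simp]:
  shows "Hinner M (\<lambda>x. c *\<^sub>R u x) w = c * Hinner M u w"
  unfolding Hinner_def by simp

lemma Hinner_commute: "Hinner M u v = Hinner M v u"
  unfolding Hinner_def by (simp add: inner_commute)

lemma Hinner_add_right[simp]:
  assumes "u \<in> Hsp M" "v \<in> Hsp M" "w \<in> Hsp M"
  shows "Hinner M w (\<lambda>x. u x + v x) = Hinner M w u + Hinner M w v"
  using assms by (simp add: Hinner_commute[of M w])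

lemma Hinner_diff_right[simp]:
  assumes "u \<in> Hsp M" "v \<in> Hsp M" "w \<in> Hsp M"
  shows "Hinner M w (\<lambda>x. u x - v x) = Hinner M w u - Hinner M w v"
  using assms by (simp add: Hinner_commute[of M w])

lemma Hinner_scale_right[simp]:
  shows "Hinner M w (\<lambda>x. c *\<^sub>R u x) = c * Hinner M w u"
  by (simp add: Hinner_commute[of M w])

lemma Hinner_self_nonneg: "Hinner M u u \<ge> 0"
  unfolding Hinner_def by (rule integral_nonneg_AE) simp

lemma Hnorm_nonneg: "Hnorm M u \<ge> 0"
  unfolding Hnorm_def by simp

lemma Hnorm_sq: "(Hnorm M u)\<^sup>2 = Hinner M u u"
proof -
  have "(\<integral>x. (norm (u x))\<^sup>2 \<partial>M) \<ge> 0" by (rule integral_nonneg_AE) simp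
  then show ?thesis unfolding Hnorm_def Hinner_def by (simp add: power2_norm_eq_inner)
qed

lemma quad_nonneg_disc:
  fixes A B C :: real
  assumes "\<And>t. 0 \<le> A - 2 * t * B + t\<^sup>2 * C" and C: "C \<ge> 0"
  shows "B\<^sup>2 \<le> A * C"
proof (cases "C = 0")
  case True
  have "B = 0"
  proof (rule ccontr)
    assume "B \<noteq> 0"
    have e: "2 * ((A + 1) / (2 * B)) * B = A + 1" using \<open>B \<noteq> 0\<close> by (simp add: field_simps)
    have "0 \<le> A - 2 * ((A + 1) / (2 * B)) * B + ((A + 1) / (2 * B))\<^sup>2 * C" by (rule assms)
    then show False using e True by simp
  qed
  then show ?thesis using assms(1)[of 0] True by simp
next
  case False
  then have "C > 0" using C by simp
  have "0 \<le> A - 2 * (B / C) * B + (B / C)\<^sup>2 * C" by (rule assms)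
  then have "0 \<le> A - B\<^sup>2 / C" using \<open>C > 0\<close> by (simp add: power2_eq_square field_simps)
  then show ?thesis using \<open>C > 0\<close> by (simp add: field_simps)
qed

lemma Hinner_CS:
  assumes "u \<in> Hsp M" "v \<in> Hsp M"
  shows "\<bar>Hinner M u v\<bar> \<le> Hnorm M u * Hnorm M v"
proof -
  have "0 \<le> Hinner M u u - 2 * t * Hinner M u v + t\<^sup>2 * Hinner M v v" for t
  proof -
    have "0 \<le> Hinner M (\<lambda>x. u x - t *\<^sub>R v x) (\<lambda>x. u x - t *\<^sub>R v x)"
      by (rule Hinner_self_nonneg)
    also have "\<dots> = Hinner M u u - 2 * t * Hinner M u v + t\<^sup>2 * Hinner M v v"
      using assms by (simp add: Hinner_commute[of M v u] power2_eq_square algebra_simps)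
    finally show ?thesis .
  qed
  then have "(Hinner M u v)\<^sup>2 \<le> Hinner M u u * Hinner M v v"
    using quad_nonneg_disc Hinner_self_nonneg by blast
  also have "\<dots> = (Hnorm M u * Hnorm M v)\<^sup>2" by (simp add: Hnorm_sq power_mult_distrib)
  finally have "\<bar>Hinner M u v\<bar>\<^sup>2 \<le> (Hnorm M u * Hnorm M v)\<^sup>2" by simp
  then show ?thesis
    by (rule power2_le_imp_le) (simp add: Hnorm_nonneg)
qed

lemma Hnorm_triangle_add:
  assumes "u \<in> Hsp M" "v \<in> Hsp M"
  shows "Hnorm M (\<lambda>x. u x + v x) \<le> Hnorm M u + Hnorm M v"
proof -
  have "(Hnorm M (\<lambda>x. u x + v x))\<^sup>2 = Hinner M u u + 2 * Hinner M u v + Hinner M v v"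
    using assms by (simp add: Hnorm_sq Hinner_commute[of M v u])
  also have "\<dots> \<le> (Hnorm M u)\<^sup>2 + 2 * (Hnorm M u * Hnorm M v) + (Hnorm M v)\<^sup>2"
    using Hinner_CS[OF assms] by (simp add: Hnorm_sq)
  also have "\<dots> = (Hnorm M u + Hnorm M v)\<^sup>2" by (simp add: power2_eq_square algebra_simps)
  finally show ?thesis
    using Hnorm_nonneg by (meson add_nonneg_nonneg power2_le_imp_le)
qed

lemma Hnorm_triangle:
  assumes "u \<in> Hsp M" "v \<in> Hsp M" "w \<in> Hsp M"
  shows "Hnorm M (\<lambda>x. u x - w x) \<le> Hnorm M (\<lambda>x. u x - v x) + Hnorm M (\<lambda>x. v x - w x)"
proof -
  have "(\<lambda>x. u x - w x) = (\<lambda>x. (u x - v x) + (v x - w x))" by auto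
  then show ?thesis using Hnorm_triangle_add[of "\<lambda>x. u x - v x" M "\<lambda>x. v x - w x"] assms
    by simp
qed

lemma Hnorm_scale: "Hnorm M (\<lambda>x. c *\<^sub>R u x) = \<bar>c\<bar> * Hnorm M u"
proof -
  have "(Hnorm M (\<lambda>x. c *\<^sub>R u x))\<^sup>2 = c * (c * Hinner M u u)"
    by (simp add: Hnorm_sq)
  also have "\<dots> = (\<bar>c\<bar> * Hnorm M u)\<^sup>2"
    by (simp add: Hnorm_sq power_mult_distrib power2_eq_square[of c])
  finally have "(Hnorm M (\<lambda>x. c *\<^sub>R u x))\<^sup>2 = (\<bar>c\<bar> * Hnorm M u)\<^sup>2" .
  then show ?thesis using Hnorm_nonneg
    by (metis abs_ge_zero mult_nonneg_nonneg power2_eq_imp_eq)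
qed

lemma Hnorm_commute: "Hnorm M (\<lambda>x. u x - v x) = Hnorm M (\<lambda>x. v x - u x)"
  unfolding Hnorm_def by (simp add: norm_minus_commute)

lemma Hnorm_sq_diff:
  assumes "u \<in> Hsp M" "v \<in> Hsp M"
  shows "(Hnorm M (\<lambda>x. u x - v x))\<^sup>2 = Hinner M u u - 2 * Hinner M u v + Hinner M v v"
  using assms by (simp add: Hnorm_sq Hinner_commute[of M v u])

lemma conv_grad:
  assumes gr: "H_frechet_gradient M F G" and cv: "H_lambda_convex M lam F"
    and u: "u \<in> Hsp M" and w: "w \<in> Hsp M"
  shows "F u + Hinner M (G u) (\<lambda>x. w x - u x) + lam / 2 * (Hnorm M (\<lambda>x. w x - u x))\<^sup>2 \<le> F w"
proof -
  define h where "h = (\<lambda>x. w x - u x)"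
  define nh where "nh = Hnorm M h"
  define b where "b = Hinner M (G u) h"
  have nh0: "nh \<ge> 0" unfolding nh_def by (rule Hnorm_nonneg)
  have hH: "h \<in> Hsp M" unfolding h_def using u w by simp
  have "F u + b + lam / 2 * nh\<^sup>2 \<le> F w"
  proof (rule field_le_epsilon)
    fix e :: real assume e: "0 < e"
    define \<epsilon> where "\<epsilon> = e / (2 * (nh + 1))"
    have \<epsilon>0: "\<epsilon> > 0" using e nh0 unfolding \<epsilon>_def by simp
    have \<epsilon>nh: "\<epsilon> * nh \<le> e / 2" using e nh0 unfolding \<epsilon>_def by (simp add: field_simps)
    obtain \<delta> where \<delta>0: "\<delta> > 0" and fr: "\<forall>\<eta>\<in>Hsp M. Hnorm M (\<lambda>x. \<eta> x - u x) < \<delta> \<longrightarrow>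
            \<bar>F \<eta> - F u - Hinner M (G u) (\<lambda>x. \<eta> x - u x)\<bar> \<le> \<epsilon> * Hnorm M (\<lambda>x. \<eta> x - u x)"
      using gr u \<epsilon>0 unfolding H_frechet_gradient_def by blast
    define t where "t = min 1 (min (\<delta> / (2 * (nh + 1))) (e / (\<bar>lam\<bar> * nh\<^sup>2 + 1)))"
    have t0: "t > 0" using \<delta>0 e nh0 unfolding t_def by (simp add: add_nonneg_pos)
    have t1: "t \<le> 1" unfolding t_def by simp
    have "t \<le> \<delta> / (2 * (nh + 1))" unfolding t_def by simp
    then have "t * (2 * (nh + 1)) \<le> \<delta>" using nh0 by (simp add: field_simps)
    then have tnh: "t * nh < \<delta>" using t0 nh0 \<delta>0 by (simp add: algebra_simps)
    have "t \<le> e / (\<bar>lam\<bar> * nh\<^sup>2 + 1)" unfolding t_def by simp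
    moreover have "\<bar>lam\<bar> * nh\<^sup>2 + 1 > 0" by (simp add: add_nonneg_pos)
    ultimately have "t * (\<bar>lam\<bar> * nh\<^sup>2 + 1) \<le> e" by (simp add: pos_le_divide_eq)
    then have tlam: "\<bar>lam\<bar> * t * nh\<^sup>2 \<le> e" using t0 by (simp add: algebra_simps)
    define z where "z = (\<lambda>x. (1 - t) *\<^sub>R u x + t *\<^sub>R w x)"
    have zH: "z \<in> Hsp M" unfolding z_def using u w by simp
    have zd: "(\<lambda>x. z x - u x) = (\<lambda>x. t *\<^sub>R h x)"
      by (auto simp: z_def h_def algebra_simps)
    have nz: "Hnorm M (\<lambda>x. z x - u x) = t * nh"
      unfolding zd Hnorm_scale nh_def using t0 by simp
    have bz: "Hinner M (G u) (\<lambda>x. z x - u x) = t * b"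
      unfolding zd b_def by simp
    have "\<bar>F z - F u - t * b\<bar> \<le> \<epsilon> * (t * nh)"
      using fr zH nz bz tnh by auto
    then have A: "t * b - \<epsilon> * (t * nh) \<le> F z - F u" by linarith
    have "F z \<le> (1 - t) * F u + t * F w - lam / 2 * t * (1 - t) * (Hnorm M (\<lambda>x. u x - w x))\<^sup>2"
      using cv u w t0 t1 unfolding H_lambda_convex_def z_def by auto
    moreover have "Hnorm M (\<lambda>x. u x - w x) = nh" unfolding nh_def h_def by (rule Hnorm_commute)
    ultimately have B: "F z - F u \<le> t * (F w - F u) - lam / 2 * t * (1 - t) * nh\<^sup>2" by (simp add: algebra_simps)
    have "t * (F u + b + lam / 2 * nh\<^sup>2 - F w - \<epsilon> * nh - lam / 2 * t * nh\<^sup>2) \<le> 0"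
    proof -
      define K where "K = lam * nh\<^sup>2"
      have B': "F z - F u \<le> t * (F w - F u) - K / 2 * t + K / 2 * (t * t)"
        using B unfolding K_def by (simp add: algebra_simps diff_divide_distrib add_divide_distrib; linarith)
      have "t * (F u + b + lam / 2 * nh\<^sup>2 - F w - \<epsilon> * nh - lam / 2 * t * nh\<^sup>2)
          = t * F u + t * b + K / 2 * t - t * F w - \<epsilon> * (t * nh) - K / 2 * (t * t)"
        unfolding K_def by (simp add: algebra_simps)
      also have "\<dots> \<le> 0" using A B' by (simp add: algebra_simps diff_divide_distrib add_divide_distrib; linarith)
      finally show ?thesis .
    qed
    then have C: "F u + b + lam / 2 * nh\<^sup>2 - F w - \<epsilon> * nh - lam / 2 * t * nh\<^sup>2 \<le> 0"
      using t0 by (simp add: mult_le_0_iff)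
    have "lam / 2 * t * nh\<^sup>2 \<le> \<bar>lam\<bar> * t * nh\<^sup>2 / 2"
      using t0 by (simp add: mult_right_mono)
    then show "F u + b + lam / 2 * nh\<^sup>2 \<le> F w + e" using C tlam \<epsilon>nh by linarith
  qed
  then show ?thesis unfolding b_def nh_def h_def .
qed

lemma foc:
  assumes gr: "H_frechet_gradient M F G" and tau: "\<tau> > 0"
    and x: "x \<in> Hsp M" and y: "y \<in> Hsp M"
    and mn: "\<forall>\<xi>\<in>Hsp M. scheme_obj M F G \<tau> x y \<le> scheme_obj M F G \<tau> x \<xi>"
    and v: "v \<in> Hsp M"
  shows "Hinner M (G y) v / 2 + Hinner M (G x) v / 2 + Hinner M (\<lambda>z. y z - x z) v / \<tau> = 0"
proof -
  define c where "c = Hinner M (G y) v / 2 + Hinner M (G x) v / 2 + Hinner M (\<lambda>z. y z - x z) v / \<tau>"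
  define nv where "nv = Hnorm M v"
  have nv0: "nv \<ge> 0" unfolding nv_def by (rule Hnorm_nonneg)
  have Gx: "G x \<in> Hsp M" and Gy: "G y \<in> Hsp M" using gr x y unfolding H_frechet_gradient_def by auto
  have expand: "scheme_obj M F G \<tau> x (\<lambda>z. y z + r *\<^sub>R v z) - scheme_obj M F G \<tau> x y
      = (F (\<lambda>z. y z + r *\<^sub>R v z) - F y) / 2 + r * Hinner M (G x) v / 2
        + r * Hinner M (\<lambda>z. y z - x z) v / \<tau> + r\<^sup>2 * nv\<^sup>2 / (2 * \<tau>)" for r
  proof -
    have h1: "Hinner M (G x) (\<lambda>z. y z + r *\<^sub>R v z) = Hinner M (G x) y + r * Hinner M (G x) v"
      using Gx y v by simp
    define d where "d = (\<lambda>z. y z - x z)"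
    have dH: "d \<in> Hsp M" unfolding d_def using x y by simp
    have e1: "(\<lambda>z. y z + r *\<^sub>R v z - x z) = (\<lambda>z. d z + r *\<^sub>R v z)"
      unfolding d_def by (auto simp: algebra_simps)
    have h2: "(Hnorm M (\<lambda>z. y z + r *\<^sub>R v z - x z))\<^sup>2 = (Hnorm M (\<lambda>z. y z - x z))\<^sup>2
        + 2 * r * Hinner M (\<lambda>z. y z - x z) v + r\<^sup>2 * nv\<^sup>2"
      unfolding e1 d_def[symmetric] nv_def Hnorm_sq using dH v
      by (simp add: Hinner_commute[of M v d] algebra_simps power2_eq_square)
    show ?thesis unfolding scheme_obj_def h1 h2 using tau
      by (simp add: diff_divide_distrib add_divide_distrib)
  qed
  have "\<bar>c\<bar> \<le> 0"
  proof (rule field_le_epsilon)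
    fix e :: real assume e: "0 < e"
    define \<epsilon> where "\<epsilon> = e / (nv + 1)"
    have \<epsilon>0: "\<epsilon> > 0" using e nv0 unfolding \<epsilon>_def by simp
    have \<epsilon>nv: "\<epsilon> * nv \<le> e" using e nv0 unfolding \<epsilon>_def by (simp add: field_simps)
    obtain \<delta> where \<delta>0: "\<delta> > 0" and fr: "\<forall>\<eta>\<in>Hsp M. Hnorm M (\<lambda>z. \<eta> z - y z) < \<delta> \<longrightarrow>
            \<bar>F \<eta> - F y - Hinner M (G y) (\<lambda>z. \<eta> z - y z)\<bar> \<le> \<epsilon> * Hnorm M (\<lambda>z. \<eta> z - y z)"
      using gr y \<epsilon>0 unfolding H_frechet_gradient_def by blast
    define \<rho> where "\<rho> = min (\<delta> / (2 * (nv + 1))) (e * \<tau> / (nv\<^sup>2 + 1))"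
    have \<rho>0: "\<rho> > 0" using \<delta>0 e nv0 tau unfolding \<rho>_def by (simp add: add_nonneg_pos)
    have "\<rho> \<le> \<delta> / (2 * (nv + 1))" unfolding \<rho>_def by simp
    then have "\<rho> * (2 * (nv + 1)) \<le> \<delta>" using nv0 by (simp add: field_simps)
    then have \<rho>nv: "\<rho> * nv < \<delta>" using \<rho>0 nv0 \<delta>0 by (simp add: algebra_simps)
    have "\<rho> \<le> e * \<tau> / (nv\<^sup>2 + 1)" unfolding \<rho>_def by simp
    moreover have "nv\<^sup>2 + 1 > 0" by (simp add: add_nonneg_pos)
    ultimately have "\<rho> * (nv\<^sup>2 + 1) \<le> e * \<tau>" by (simp add: pos_le_divide_eq)
    then have "\<rho> * nv\<^sup>2 \<le> e * \<tau>" using \<rho>0 by (simp add: algebra_simps)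
    then have \<rho>nv2: "\<rho> * nv\<^sup>2 / \<tau> \<le> e" using tau by (simp add: pos_divide_le_eq)
    define r where "r = (if c \<ge> 0 then - \<rho> else \<rho>)"
    have rabs: "\<bar>r\<bar> = \<rho>" using \<rho>0 unfolding r_def by auto
    have rc: "r * c = - \<rho> * \<bar>c\<bar>" unfolding r_def by auto
    define \<eta> where "\<eta> = (\<lambda>z. y z + r *\<^sub>R v z)"
    have \<eta>H: "\<eta> \<in> Hsp M" unfolding \<eta>_def using y v by simp
    have \<eta>d: "(\<lambda>z. \<eta> z - y z) = (\<lambda>z. r *\<^sub>R v z)" unfolding \<eta>_def by auto
    have n\<eta>: "Hnorm M (\<lambda>z. \<eta> z - y z) = \<rho> * nv" unfolding \<eta>d Hnorm_scale rabs nv_def ..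
    have b\<eta>: "Hinner M (G y) (\<lambda>z. \<eta> z - y z) = r * Hinner M (G y) v" unfolding \<eta>d by simp
    have fb: "\<bar>F \<eta> - F y - r * Hinner M (G y) v\<bar> \<le> \<epsilon> * (\<rho> * nv)"
      using fr \<eta>H n\<eta> b\<eta> \<rho>nv by auto
    have "0 \<le> scheme_obj M F G \<tau> x \<eta> - scheme_obj M F G \<tau> x y" using mn \<eta>H by auto
    also have "\<dots> = (F \<eta> - F y) / 2 + r * Hinner M (G x) v / 2
        + r * Hinner M (\<lambda>z. y z - x z) v / \<tau> + r\<^sup>2 * nv\<^sup>2 / (2 * \<tau>)"
      unfolding \<eta>_def by (rule expand)
    also have "\<dots> \<le> r * c + \<epsilon> * (\<rho> * nv) / 2 + \<rho> * (\<rho> * nv\<^sup>2 / \<tau>) / 2"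
    proof -
      have "r\<^sup>2 = \<rho> * \<rho>" using rabs by (metis abs_mult_self_eq power2_eq_square)
      then have "r\<^sup>2 * nv\<^sup>2 / (2 * \<tau>) = \<rho> * (\<rho> * nv\<^sup>2 / \<tau>) / 2" by simp
      moreover have "F \<eta> - F y \<le> r * Hinner M (G y) v + \<epsilon> * (\<rho> * nv)"
        using fb by linarith
      moreover have "r * c = r * Hinner M (G y) v / 2 + r * Hinner M (G x) v / 2 + r * Hinner M (\<lambda>z. y z - x z) v / \<tau>"
        unfolding c_def by (simp add: algebra_simps)
      ultimately show ?thesis by (simp only: diff_divide_distrib add_divide_distrib; linarith)
    qed
    finally have "\<rho> * \<bar>c\<bar> \<le> \<rho> * (\<epsilon> * nv / 2 + \<rho> * nv\<^sup>2 / \<tau> / 2)"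
      unfolding rc by (simp add: algebra_simps)
    then have "\<bar>c\<bar> \<le> \<epsilon> * nv / 2 + \<rho> * nv\<^sup>2 / \<tau> / 2" using \<rho>0 by simp
    moreover have "\<epsilon> * nv / 2 \<le> e / 2" using \<epsilon>nv by simp
    moreover have "\<rho> * nv\<^sup>2 / \<tau> / 2 \<le> e / 2" using \<rho>nv2 by simp
    ultimately show "\<bar>c\<bar> \<le> 0 + e" by linarith
  qed
  then show ?thesis unfolding c_def by simp
qed

lemma step_real:
  fixes a1 a2 a3 b1 b2 b3 b4 b5 D Fx Fy F\<xi> Px Py lam \<tau> :: real
  assumes tau: "\<tau> > 0"
    and f1: "a1 / 2 + a2 / 2 + a3 / \<tau> = 0"
    and f2: "b1 / 2 + b2 / 2 + b4 / \<tau> = 0"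
    and f3: "b3 / 2 + b1 / 2 + b5 / \<tau> = 0"
    and f4: "b5 / 2 + b4 / 2 + D / \<tau> = 0"
    and c1: "Fy + a1 + lam / 2 * Py \<le> F\<xi>"
    and c2: "Fx + (a2 + b4) + lam / 2 * Px \<le> F\<xi>"
    and n: "Px = Py + 2 * a3 + D"
  shows "(Py - Px) / (2 * \<tau>) + Fy / 2 + Fx / 2 + lam / 4 * (Px + Py) + \<tau> / 8 * (b3 - b2) \<le> F\<xi>"
proof -
  have t1: "b3 - b2 = 2 * (b4 / \<tau>) - 2 * (b5 / \<tau>)" using f2 f3 by linarith
  have t2: "b5 / \<tau> = - (b4 / \<tau>) - 2 * (D / \<tau>) / \<tau>"
  proof -
    have "b5 = - b4 - 2 * (D / \<tau>)" using f4 by linarith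
    then show ?thesis by (simp add: diff_divide_distrib)
  qed
  have "\<tau> / 8 * (b3 - b2) = \<tau> * (b4 / \<tau>) / 4 - \<tau> * (b5 / \<tau>) / 4" unfolding t1 by (simp add: algebra_simps)
  also have "\<dots> = b4 / 2 + (D / \<tau>) / 2" unfolding t2 using tau by (simp add: field_simps)
  finally have g: "\<tau> / 8 * (b3 - b2) = b4 / 2 + (D / \<tau>) / 2" .
  have p: "(Py - Px) / (2 * \<tau>) = - (a3 / \<tau>) - (D / \<tau>) / 2"
    unfolding n using tau by (simp add: field_simps)
  have "a1 + a2 = - 2 * (a3 / \<tau>)" using f1 by linarith
  moreover have "lam / 4 * (Px + Py) = (lam / 2 * Px) / 2 + (lam / 2 * Py) / 2" by (simp add: algebra_simps)
  ultimately show ?thesis unfolding g p using c1 c2 by linarith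
qed

lemma grad_real:
  fixes b2 b3 b4 b5 D lam \<tau> ngx ngy nd :: real
  assumes tau: "\<tau> > 0"
    and t1: "b3 - b2 = 2 * (b4 / \<tau>) - 2 * (b5 / \<tau>)"
    and f4: "b5 / 2 + b4 / 2 + D / \<tau> = 0"
    and mono: "b4 - b5 + lam * D \<le> 0"
    and cs1: "\<bar>b4\<bar> \<le> ngx * nd" and cs2: "\<bar>b5\<bar> \<le> ngy * nd"
    and e2: "b2 = ngx\<^sup>2" and e3: "b3 = ngy\<^sup>2" and eD: "D = nd\<^sup>2"
    and n0: "ngx \<ge> 0" "ngy \<ge> 0" "nd \<ge> 0"
  shows "b3 - b2 \<le> \<bar>lam\<bar> * \<tau> * (b2 + b3)"
proof -
  have "- lam * D \<le> \<bar>lam\<bar> * D" using eD by (intro mult_right_mono) auto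
  then have "b4 - b5 \<le> \<bar>lam\<bar> * D" using mono by linarith
  then have "2 * (b4 - b5) / \<tau> \<le> 2 * (\<bar>lam\<bar> * D) / \<tau>" using tau by (simp add: divide_right_mono)
  then have h1: "b3 - b2 \<le> 2 * \<bar>lam\<bar> * D / \<tau>" using t1 by (simp add: diff_divide_distrib)
  have "- b4 \<le> ngx * nd" "- b5 \<le> ngy * nd" using cs1 cs2 by linarith+
  then have "D / \<tau> \<le> (ngx * nd + ngy * nd) / 2" using f4 by (simp only: add_divide_distrib; linarith)
  then have "D \<le> \<tau> * ((ngx * nd + ngy * nd) / 2)" using tau by (simp add: pos_divide_le_eq mult.commute)
  then have ndle: "nd * nd \<le> nd * (\<tau> * (ngx + ngy) / 2)" using eD by (simp add: power2_eq_square algebra_simps)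
  have sq: "nd\<^sup>2 \<le> (\<tau> * (ngx + ngy) / 2)\<^sup>2"
  proof (cases "nd = 0")
    case True then show ?thesis by simp
  next
    case False
    then have "nd > 0" using n0 by simp
    then have "nd \<le> \<tau> * (ngx + ngy) / 2" using ndle by (simp add: mult_le_cancel_left_pos)
    then show ?thesis using n0 by (intro power_mono) auto
  qed
  have "(ngx + ngy)\<^sup>2 \<le> 2 * (ngx\<^sup>2 + ngy\<^sup>2)"
  proof -
    have "0 \<le> (ngx - ngy)\<^sup>2" by simp
    then show ?thesis by (simp add: power2_sum power2_diff)
  qed
  then have "\<tau>\<^sup>2 * (ngx + ngy)\<^sup>2 \<le> \<tau>\<^sup>2 * (2 * (ngx\<^sup>2 + ngy\<^sup>2))" by (intro mult_left_mono) auto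
  moreover have "(\<tau> * (ngx + ngy) / 2)\<^sup>2 = \<tau>\<^sup>2 * (ngx + ngy)\<^sup>2 / 4" by (simp add: power_mult_distrib power_divide)
  moreover have "\<tau>\<^sup>2 * (2 * (ngx\<^sup>2 + ngy\<^sup>2)) = 2 * (\<tau>\<^sup>2 * (b2 + b3))" using e2 e3 by simp
  ultimately have "D \<le> \<tau>\<^sup>2 * (b2 + b3) / 2" using sq eD by linarith
  then have "2 * \<bar>lam\<bar> * D / \<tau> \<le> 2 * \<bar>lam\<bar> * (\<tau>\<^sup>2 * (b2 + b3) / 2) / \<tau>"
    using tau by (intro divide_right_mono mult_left_mono) auto
  also have "\<dots> = \<bar>lam\<bar> * \<tau> * (b2 + b3)" using tau by (simp add: power2_eq_square field_simps)
  finally show ?thesis using h1 by linarith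
qed

lemma growth_real:
  fixes a b c :: real
  assumes "b - a \<le> c * (a + b)" "0 \<le> c" "c \<le> 1/2" "a \<ge> 0"
  shows "b \<le> (1 + 4 * c) * a"
proof -
  have "b * (1 - c) \<le> a * (1 + c)" using assms(1) by (simp add: algebra_simps)
  also have "\<dots> \<le> a * ((1 + 4 * c) * (1 - c))"
  proof (rule mult_left_mono)
    have "0 \<le> c * (1 - 2 * c)" using assms by simp
    then show "1 + c \<le> (1 + 4 * c) * (1 - c)" by (simp add: algebra_simps)
  qed (use assms in auto)
  finally have "b * (1 - c) \<le> ((1 + 4 * c) * a) * (1 - c)" by (simp add: algebra_simps)
  moreover have "1 - c > 0" using assms by simp
  ultimately show ?thesis by simp
qed

lemma step_facts:
  assumes gr: "H_frechet_gradient M F G" and cv: "H_lambda_convex M lam F" and tau: "\<tau> > 0"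
    and x: "x \<in> Hsp M" and y: "y \<in> Hsp M" and xi: "\<xi> \<in> Hsp M"
    and mn: "\<forall>\<xi>\<in>Hsp M. scheme_obj M F G \<tau> x y \<le> scheme_obj M F G \<tau> x \<xi>"
  shows "((Hnorm M (\<lambda>z. y z - \<xi> z))\<^sup>2 - (Hnorm M (\<lambda>z. x z - \<xi> z))\<^sup>2) / (2 * \<tau>) + F y / 2 + F x / 2
           + lam / 4 * ((Hnorm M (\<lambda>z. x z - \<xi> z))\<^sup>2 + (Hnorm M (\<lambda>z. y z - \<xi> z))\<^sup>2)
           + \<tau> / 8 * ((Hnorm M (G y))\<^sup>2 - (Hnorm M (G x))\<^sup>2) \<le> F \<xi>"
    and "(Hnorm M (G y))\<^sup>2 - (Hnorm M (G x))\<^sup>2 \<le> \<bar>lam\<bar> * \<tau> * ((Hnorm M (G x))\<^sup>2 + (Hnorm M (G y))\<^sup>2)"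
proof -
  define gx where "gx = G x"
  define gy where "gy = G y"
  define d where "d = (\<lambda>z. y z - x z)"
  define w where "w = (\<lambda>z. \<xi> z - y z)"
  have gxH: "gx \<in> Hsp M" and gyH: "gy \<in> Hsp M" using gr x y unfolding H_frechet_gradient_def gx_def gy_def by auto
  have dH: "d \<in> Hsp M" unfolding d_def using x y by simp
  have wH: "w \<in> Hsp M" unfolding w_def using xi y by simp
  have foc': "Hinner M gy v / 2 + Hinner M gx v / 2 + Hinner M d v / \<tau> = 0" if "v \<in> Hsp M" for v
    using foc[OF gr tau x y mn that] unfolding gx_def gy_def d_def .
  have f1: "Hinner M gy w / 2 + Hinner M gx w / 2 + Hinner M d w / \<tau> = 0" by (rule foc'[OF wH])
  have f2: "Hinner M gx gy / 2 + Hinner M gx gx / 2 + Hinner M d gx / \<tau> = 0"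
    using foc'[OF gxH] by (simp add: Hinner_commute[of M gy gx])
  have f3: "Hinner M gy gy / 2 + Hinner M gx gy / 2 + Hinner M d gy / \<tau> = 0"
    using foc'[OF gyH] by simp
  have f4: "Hinner M d gy / 2 + Hinner M d gx / 2 + Hinner M d d / \<tau> = 0"
    using foc'[OF dH] by (simp add: Hinner_commute[of M gy d] Hinner_commute[of M gx d])
  have Py: "(Hnorm M (\<lambda>z. y z - \<xi> z))\<^sup>2 = Hinner M w w"
    unfolding w_def Hnorm_commute[of M y] Hnorm_sq ..
  have xw: "(\<lambda>z. \<xi> z - x z) = (\<lambda>z. w z + d z)" unfolding w_def d_def by auto
  have Px: "(Hnorm M (\<lambda>z. x z - \<xi> z))\<^sup>2 = Hinner M w w + 2 * Hinner M d w + Hinner M d d"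
    unfolding Hnorm_commute[of M x] xw Hnorm_sq using wH dH by (simp add: Hinner_commute[of M w d])
  have c1: "F y + Hinner M gy w + lam / 2 * Hinner M w w \<le> F \<xi>"
    using conv_grad[OF gr cv y xi] unfolding gy_def[symmetric] w_def[symmetric] Hnorm_sq .
  have c2: "F x + (Hinner M gx w + Hinner M d gx) + lam / 2 * (Hinner M w w + 2 * Hinner M d w + Hinner M d d) \<le> F \<xi>"
    using conv_grad[OF gr cv x xi] unfolding gx_def[symmetric] Px[unfolded Hnorm_commute[of M x]] xw
    using wH dH gxH by (simp add: Hinner_commute[of M gx d] Hnorm_sq Hinner_commute[of M w d] add_ac)
  show "((Hnorm M (\<lambda>z. y z - \<xi> z))\<^sup>2 - (Hnorm M (\<lambda>z. x z - \<xi> z))\<^sup>2) / (2 * \<tau>) + F y / 2 + F x / 2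
           + lam / 4 * ((Hnorm M (\<lambda>z. x z - \<xi> z))\<^sup>2 + (Hnorm M (\<lambda>z. y z - \<xi> z))\<^sup>2)
           + \<tau> / 8 * ((Hnorm M (G y))\<^sup>2 - (Hnorm M (G x))\<^sup>2) \<le> F \<xi>"
    unfolding Px Py unfolding gx_def[symmetric] gy_def[symmetric] Hnorm_sq
    by (rule step_real[OF tau f1 f2 f3 f4 c1 c2]) simp
  have t1: "Hinner M gy gy - Hinner M gx gx = 2 * (Hinner M d gx / \<tau>) - 2 * (Hinner M d gy / \<tau>)"
    using f2 f3 by linarith
  have m1: "F x + Hinner M gx d + lam / 2 * Hinner M d d \<le> F y"
    using conv_grad[OF gr cv x y] unfolding gx_def[symmetric] d_def[symmetric] Hnorm_sq .
  have yx: "(\<lambda>z. x z - y z) = (\<lambda>z. (-1) *\<^sub>R d z)" unfolding d_def by auto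
  have m2: "F y - Hinner M gy d + lam / 2 * Hinner M d d \<le> F x"
  proof -
    have a: "Hinner M gy (\<lambda>z. (-1) *\<^sub>R d z) = - Hinner M gy d"
      by (simp only: Hinner_scale_right; simp)
    have b: "Hinner M (\<lambda>z. (-1) *\<^sub>R d z) (\<lambda>z. (-1) *\<^sub>R d z) = Hinner M d d"
      by (simp only: Hinner_scale_right Hinner_scale_left; simp)
    show ?thesis using conv_grad[OF gr cv y x] unfolding gy_def[symmetric] yx Hnorm_sq a b by simp
  qed
  have mono: "Hinner M d gx - Hinner M d gy + lam * Hinner M d d \<le> 0"
    using m1 m2 by (simp add: Hinner_commute[of M gx d] Hinner_commute[of M gy d])
  have cs1: "\<bar>Hinner M d gx\<bar> \<le> Hnorm M gx * Hnorm M d"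
    using Hinner_CS[OF dH gxH] by (simp add: mult.commute)
  have cs2: "\<bar>Hinner M d gy\<bar> \<le> Hnorm M gy * Hnorm M d"
    using Hinner_CS[OF dH gyH] by (simp add: mult.commute)
  show "(Hnorm M (G y))\<^sup>2 - (Hnorm M (G x))\<^sup>2 \<le> \<bar>lam\<bar> * \<tau> * ((Hnorm M (G x))\<^sup>2 + (Hnorm M (G y))\<^sup>2)"
    unfolding gx_def[symmetric] gy_def[symmetric]
    by (rule grad_real[OF tau _ f4 mono cs1 cs2])
      (use t1 in \<open>simp_all add: Hnorm_sq Hnorm_nonneg\<close>)
qed

definition Hcont :: "'a::euclidean_space measure \<Rightarrow> (('a \<Rightarrow> 'a) \<Rightarrow> real) \<Rightarrow> ('a \<Rightarrow> 'a) \<Rightarrow> bool" where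
  "Hcont M f u \<longleftrightarrow> (\<forall>e>0. \<exists>d>0. \<forall>\<eta>\<in>Hsp M. Hnorm M (\<lambda>x. \<eta> x - u x) < d \<longrightarrow> \<bar>f \<eta> - f u\<bar> < e)"

lemma frechet_Hcont:
  assumes gr: "H_frechet_gradient M F G" and u: "u \<in> Hsp M"
  shows "Hcont M F u"
  unfolding Hcont_def
proof (intro allI impI)
  fix e :: real assume e: "e > 0"
  obtain \<delta> where \<delta>0: "\<delta> > 0" and fr: "\<forall>\<eta>\<in>Hsp M. Hnorm M (\<lambda>x. \<eta> x - u x) < \<delta> \<longrightarrow>
            \<bar>F \<eta> - F u - Hinner M (G u) (\<lambda>x. \<eta> x - u x)\<bar> \<le> 1 * Hnorm M (\<lambda>x. \<eta> x - u x)"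
    using gr u unfolding H_frechet_gradient_def by (meson zero_less_one)
  have Gu: "G u \<in> Hsp M" using gr u unfolding H_frechet_gradient_def by auto
  define g where "g = Hnorm M (G u)"
  have g0: "g \<ge> 0" unfolding g_def by (rule Hnorm_nonneg)
  define d where "d = min \<delta> (e / (g + 2))"
  have d0: "d > 0" unfolding d_def using \<delta>0 e g0 by simp
  show "\<exists>d>0. \<forall>\<eta>\<in>Hsp M. Hnorm M (\<lambda>x. \<eta> x - u x) < d \<longrightarrow> \<bar>F \<eta> - F u\<bar> < e"
  proof (intro exI[of _ d] conjI ballI impI d0)
    fix \<eta> assume \<eta>: "\<eta> \<in> Hsp M" and h: "Hnorm M (\<lambda>x. \<eta> x - u x) < d"
    define n where "n = Hnorm M (\<lambda>x. \<eta> x - u x)"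
    have n0: "n \<ge> 0" unfolding n_def by (rule Hnorm_nonneg)
    have "\<bar>F \<eta> - F u - Hinner M (G u) (\<lambda>x. \<eta> x - u x)\<bar> \<le> n"
      using fr \<eta> h unfolding d_def n_def by auto
    moreover have "\<bar>Hinner M (G u) (\<lambda>x. \<eta> x - u x)\<bar> \<le> g * n"
      unfolding g_def n_def by (rule Hinner_CS[OF Gu]) (use \<eta> u in simp)
    ultimately have "\<bar>F \<eta> - F u\<bar> \<le> (g + 1) * n" by (simp add: algebra_simps; linarith)
    also have "\<dots> \<le> (g + 2) * n" using n0 by (intro mult_right_mono) auto
    also have "\<dots> < (g + 2) * d" using h g0 unfolding n_def[symmetric]
      by (intro mult_strict_left_mono) auto
    also have "\<dots> \<le> e"
    proof -
      have "d \<le> e / (g + 2)" unfolding d_def by simp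
      then show ?thesis using g0 by (simp add: pos_le_divide_eq mult.commute)
    qed
    finally show "\<bar>F \<eta> - F u\<bar> < e" .
  qed
qed

lemma sqdist_Hcont:
  assumes u: "u \<in> Hsp M" and xi: "\<xi> \<in> Hsp M"
  shows "Hcont M (\<lambda>\<eta>. (Hnorm M (\<lambda>x. \<eta> x - \<xi> x))\<^sup>2) u"
  unfolding Hcont_def
proof (intro allI impI)
  fix e :: real assume e: "e > 0"
  define nu where "nu = Hnorm M (\<lambda>x. u x - \<xi> x)"
  have nu0: "nu \<ge> 0" unfolding nu_def by (rule Hnorm_nonneg)
  define d where "d = min 1 (e / (2 * nu + 2))"
  have d0: "d > 0" unfolding d_def using e nu0 by simp
  show "\<exists>d>0. \<forall>\<eta>\<in>Hsp M. Hnorm M (\<lambda>x. \<eta> x - u x) < d \<longrightarrow>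
      \<bar>(Hnorm M (\<lambda>x. \<eta> x - \<xi> x))\<^sup>2 - (Hnorm M (\<lambda>x. u x - \<xi> x))\<^sup>2\<bar> < e"
  proof (intro exI[of _ d] conjI ballI impI d0)
    fix \<eta> assume \<eta>: "\<eta> \<in> Hsp M" and h: "Hnorm M (\<lambda>x. \<eta> x - u x) < d"
    define n where "n = Hnorm M (\<lambda>x. \<eta> x - u x)"
    define ne where "ne = Hnorm M (\<lambda>x. \<eta> x - \<xi> x)"
    have n0: "n \<ge> 0" unfolding n_def by (rule Hnorm_nonneg)
    have ne0: "ne \<ge> 0" unfolding ne_def by (rule Hnorm_nonneg)
    have t1: "ne \<le> n + nu" unfolding ne_def n_def nu_def by (rule Hnorm_triangle[OF \<eta> u xi])
    have "nu \<le> Hnorm M (\<lambda>x. u x - \<eta> x) + ne" unfolding ne_def nu_def by (rule Hnorm_triangle[OF u \<eta> xi])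
    then have t2: "nu \<le> n + ne" unfolding n_def by (simp add: Hnorm_commute[of M u])
    have "ne\<^sup>2 - nu\<^sup>2 = (ne - nu) * (ne + nu)" by (simp add: power2_eq_square algebra_simps)
    then have "\<bar>ne\<^sup>2 - nu\<^sup>2\<bar> = \<bar>ne - nu\<bar> * (ne + nu)"
      using ne0 nu0 by (simp add: abs_mult)
    also have "\<dots> \<le> n * (n + 2 * nu)"
      using t1 t2 ne0 nu0 n0 by (intro mult_mono) auto
    also have "\<dots> \<le> n * (1 + 2 * nu)"
      using h n0 unfolding n_def[symmetric] d_def by (intro mult_left_mono) auto
    also have "\<dots> \<le> n * (2 * nu + 2)" using n0 by (intro mult_left_mono) auto
    also have "\<dots> < d * (2 * nu + 2)"
      using h nu0 unfolding n_def[symmetric] by (intro mult_strict_right_mono) auto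
    also have "\<dots> \<le> e"
    proof -
      have "d \<le> e / (2 * nu + 2)" unfolding d_def by simp
      then show ?thesis using nu0 by (simp add: pos_le_divide_eq)
    qed
    finally show "\<bar>(Hnorm M (\<lambda>x. \<eta> x - \<xi> x))\<^sup>2 - (Hnorm M (\<lambda>x. u x - \<xi> x))\<^sup>2\<bar> < e"
      unfolding ne_def nu_def .
  qed
qed

lemma lip_le:
  fixes L :: real
  assumes "h \<le> L * \<bar>b - a\<bar>"
  shows "h \<le> (\<bar>L\<bar> + 1) * \<bar>b - a\<bar>"
proof -
  have "L * \<bar>b - a\<bar> \<le> (\<bar>L\<bar> + 1) * \<bar>b - a\<bar>" by (intro mult_right_mono) auto
  then show ?thesis using assms by linarith
qed

lemma cont_curve:
  fixes c :: "real \<Rightarrow> ('a::euclidean_space \<Rightarrow> 'a)"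
  assumes cH: "\<And>a. a \<in> K \<Longrightarrow> c a \<in> Hsp M"
    and hc: "\<And>a. a \<in> K \<Longrightarrow> Hcont M f (c a)"
    and lip: "\<And>a b. a \<in> K \<Longrightarrow> b \<in> K \<Longrightarrow> Hnorm M (\<lambda>x. c b x - c a x) \<le> L * \<bar>b - a\<bar>"
  shows "continuous_on K (\<lambda>a. f (c a))"
  unfolding continuous_on_iff
proof (intro ballI allI impI)
  fix a e :: real assume a: "a \<in> K" and e: "e > 0"
  define L' where "L' = \<bar>L\<bar> + 1"
  have L'0: "L' > 0" unfolding L'_def by simp
  obtain d where d0: "d > 0" and hd: "\<forall>\<eta>\<in>Hsp M. Hnorm M (\<lambda>x. \<eta> x - c a x) < d \<longrightarrow> \<bar>f \<eta> - f (c a)\<bar> < e"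
    using hc[OF a] e unfolding Hcont_def by blast
  show "\<exists>d>0. \<forall>x'\<in>K. dist x' a < d \<longrightarrow> dist (f (c x')) (f (c a)) < e"
  proof (intro exI[of _ "d / L'"] conjI ballI impI)
    show "d / L' > 0" using d0 L'0 by simp
    fix b assume b: "b \<in> K" and db: "dist b a < d / L'"
    have "Hnorm M (\<lambda>x. c b x - c a x) \<le> L' * \<bar>b - a\<bar>"
      unfolding L'_def by (rule lip_le[OF lip[OF a b]])
    also have "\<dots> < L' * (d / L')" using db L'0 by (intro mult_strict_left_mono) (simp_all add: dist_real_def)
    also have "\<dots> = d" using L'0 by simp
    finally show "dist (f (c b)) (f (c a)) < e" using hd cH[OF b] by (simp add: dist_real_def)
  qed
qed

lemma unif_curve:
  fixes c :: "real \<Rightarrow> ('a::euclidean_space \<Rightarrow> 'a)"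
  assumes K: "compact K" and cH: "\<And>a. a \<in> K \<Longrightarrow> c a \<in> Hsp M"
    and hc: "\<And>a. a \<in> K \<Longrightarrow> Hcont M f (c a)"
    and lip: "\<And>a b. a \<in> K \<Longrightarrow> b \<in> K \<Longrightarrow> Hnorm M (\<lambda>x. c b x - c a x) \<le> L * \<bar>b - a\<bar>"
    and e: "e > 0"
  shows "\<exists>d>0. \<forall>b\<in>K. \<forall>\<eta>\<in>Hsp M. Hnorm M (\<lambda>x. \<eta> x - c b x) < d \<longrightarrow> \<bar>f \<eta> - f (c b)\<bar> < e"
proof (cases "K = {}")
  case True then show ?thesis by (intro exI[of _ 1]) auto
next
  case False
  define L' where "L' = \<bar>L\<bar> + 1"
  have L'0: "L' > 0" unfolding L'_def by simp
  have "\<forall>a\<in>K. \<exists>d. d > 0 \<and> (\<forall>\<eta>\<in>Hsp M. Hnorm M (\<lambda>x. \<eta> x - c a x) < d \<longrightarrow> \<bar>f \<eta> - f (c a)\<bar> < e / 2)"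
    using hc e unfolding Hcont_def by (meson half_gt_zero)
  then obtain dd where dd: "\<forall>a\<in>K. dd a > 0 \<and> (\<forall>\<eta>\<in>Hsp M. Hnorm M (\<lambda>x. \<eta> x - c a x) < dd a \<longrightarrow> \<bar>f \<eta> - f (c a)\<bar> < e / 2)"
    by (rule bchoice_iff[THEN iffD1, elim_format]) blast
  have cover: "K \<subseteq> (\<Union>a\<in>K. ball a (dd a / (2 * L')))"
    using dd L'0 by force
  obtain K' where K'K: "K' \<subseteq> K" and fin: "finite K'" and cov: "K \<subseteq> (\<Union>a\<in>K'. ball a (dd a / (2 * L')))"
    by (rule compactE_image[OF K _ cover]) auto
  have K'ne: "K' \<noteq> {}" using cov False by auto
  define \<delta> where "\<delta> = Min ((\<lambda>a. dd a / 2) ` K')"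
  have \<delta>0: "\<delta> > 0" unfolding \<delta>_def using fin K'ne K'K dd by (subst Min_gr_iff) auto
  have \<delta>le: "\<delta> \<le> dd a / 2" if "a \<in> K'" for a unfolding \<delta>_def using fin that by (intro Min_le) auto
  show ?thesis
  proof (intro exI[of _ \<delta>] conjI ballI impI \<delta>0)
    fix b \<eta> assume b: "b \<in> K" and \<eta>: "\<eta> \<in> Hsp M" and h: "Hnorm M (\<lambda>x. \<eta> x - c b x) < \<delta>"
    obtain a where a: "a \<in> K'" and ab: "b \<in> ball a (dd a / (2 * L'))" using cov b by auto
    have aK: "a \<in> K" using a K'K by auto
    have "Hnorm M (\<lambda>x. c b x - c a x) \<le> L' * \<bar>b - a\<bar>"
      unfolding L'_def by (rule lip_le[OF lip[OF aK b]])
    also have "\<dots> < L' * (dd a / (2 * L'))" using ab L'0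
      by (intro mult_strict_left_mono) (simp_all add: dist_real_def abs_minus_commute)
    also have "\<dots> = dd a / 2" using L'0 by simp
    finally have cb: "Hnorm M (\<lambda>x. c b x - c a x) < dd a / 2" .
    have "Hnorm M (\<lambda>x. \<eta> x - c a x) \<le> Hnorm M (\<lambda>x. \<eta> x - c b x) + Hnorm M (\<lambda>x. c b x - c a x)"
      by (rule Hnorm_triangle[OF \<eta> cH[OF b] cH[OF aK]])
    also have "\<dots> < dd a" using h cb \<delta>le[OF a] by linarith
    finally have "\<bar>f \<eta> - f (c a)\<bar> < e / 2" using dd aK \<eta> by blast
    moreover have "\<bar>f (c b) - f (c a)\<bar> < e / 2" using dd aK cH[OF b] cb by fastforce
    ultimately show "\<bar>f \<eta> - f (c b)\<bar> < e" by linarith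
  qed
qed

lemma sum_integral:
  fixes f :: "real \<Rightarrow> real" and p a :: "nat \<Rightarrow> real"
  assumes tau: "\<tau> > 0"
    and int: "f integrable_on {real m * \<tau> .. real (m + k) * \<tau>}"
    and step: "\<And>n. m \<le> n \<Longrightarrow> n < m + k \<Longrightarrow> integral {real n * \<tau> .. real (Suc n) * \<tau>} f
        \<le> \<tau> * c - (p (Suc n) - p n) / 2 - \<tau>\<^sup>2 / 8 * (a (Suc n) - a n) + \<tau> * E"
  shows "integral {real m * \<tau> .. real (m + k) * \<tau>} f
        \<le> real k * \<tau> * c - (p (m + k) - p m) / 2 - \<tau>\<^sup>2 / 8 * (a (m + k) - a m) + real k * \<tau> * E"
  using int step
proof (induction k)
  case 0
  then show ?case by simp
next
  case (Suc k)
  have le1: "real m * \<tau> \<le> real (m + k) * \<tau>" and le2: "real (m + k) * \<tau> \<le> real (m + Suc k) * \<tau>"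
    using tau by (simp_all add: mult_right_mono)
  have intk: "f integrable_on {real m * \<tau> .. real (m + k) * \<tau>}"
    by (rule integrable_subinterval_real[OF Suc.prems(1)]) (use le2 in auto)
  have IH: "integral {real m * \<tau> .. real (m + k) * \<tau>} f
        \<le> real k * \<tau> * c - (p (m + k) - p m) / 2 - \<tau>\<^sup>2 / 8 * (a (m + k) - a m) + real k * \<tau> * E"
    using Suc.IH[OF intk] Suc.prems(2) by auto
  have st: "integral {real (m + k) * \<tau> .. real (Suc (m + k)) * \<tau>} f
        \<le> \<tau> * c - (p (Suc (m + k)) - p (m + k)) / 2 - \<tau>\<^sup>2 / 8 * (a (Suc (m + k)) - a (m + k)) + \<tau> * E"
    using Suc.prems(2)[of "m + k"] by simp
  have "integral {real m * \<tau> .. real (m + Suc k) * \<tau>} f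
      = integral {real m * \<tau> .. real (m + k) * \<tau>} f + integral {real (m + k) * \<tau> .. real (Suc (m + k)) * \<tau>} f"
    using Henstock_Kurzweil_Integration.integral_combine[OF le1 le2 Suc.prems(1)] by simp
  also have "\<dots> \<le> real (Suc k) * \<tau> * c - (p (m + Suc k) - p m) / 2 - \<tau>\<^sup>2 / 8 * (a (m + Suc k) - a m) + real (Suc k) * \<tau> * E"
  proof -
    have e1: "real (Suc k) * \<tau> * c = real k * \<tau> * c + \<tau> * c" by (simp add: algebra_simps)
    have e2: "real (Suc k) * \<tau> * E = real k * \<tau> * E + \<tau> * E" by (simp add: algebra_simps)
    have e3: "m + Suc k = Suc (m + k)" by simp
    have e4: "\<tau>\<^sup>2 / 8 * (a (Suc (m + k)) - a m) = \<tau>\<^sup>2 / 8 * (a (Suc (m + k)) - a (m + k)) + \<tau>\<^sup>2 / 8 * (a (m + k) - a m)"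
      by (simp add: right_diff_distrib)
    show ?thesis unfolding e1 e2 e3 e4 using IH st
      by (simp only: diff_divide_distrib add_divide_distrib; linarith)
  qed
  finally show ?case .
qed

lemma growth_pow:
  fixes a :: "nat \<Rightarrow> real"
  assumes g: "\<And>n. a (Suc n) \<le> (1 + 4 * c) * a n" and c: "c \<ge> 0" and a0: "a 0 \<le> A" and A: "A \<ge> 0"
    and an: "\<And>n. a n \<ge> 0"
  shows "a n \<le> exp (4 * c * real n) * A"
proof -
  have "a n \<le> (1 + 4 * c) ^ n * a 0"
  proof (induction n)
    case 0 then show ?case by simp
  next
    case (Suc n)
    have "a (Suc n) \<le> (1 + 4 * c) * a n" by (rule g)
    also have "\<dots> \<le> (1 + 4 * c) * ((1 + 4 * c) ^ n * a 0)" using Suc c by (intro mult_left_mono) auto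
    finally show ?case by simp
  qed
  also have "\<dots> \<le> (1 + 4 * c) ^ n * A" using a0 c by (intro mult_left_mono) auto
  also have "\<dots> \<le> exp (4 * c * real n) * A"
  proof -
    have "(1 + 4 * c) ^ n \<le> (exp (4 * c)) ^ n" using c by (intro power_mono) auto
    also have "\<dots> = exp (4 * c * real n)" by (simp add: exp_of_nat_mult[symmetric] mult.commute)
    finally show ?thesis using A by (intro mult_right_mono) auto
  qed
  finally show ?thesis .
qed

lemma floor_facts:
  fixes s \<tau> :: real
  assumes "s \<ge> 0" "\<tau> > 0"
  shows "real (nat \<lfloor>s / \<tau>\<rfloor>) * \<tau> \<le> s" "s < real (nat \<lfloor>s / \<tau>\<rfloor>) * \<tau> + \<tau>"
proof -
  have f0: "\<lfloor>s / \<tau>\<rfloor> \<ge> 0" using assms by simp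
  then have e: "real (nat \<lfloor>s / \<tau>\<rfloor>) = real_of_int \<lfloor>s / \<tau>\<rfloor>" by simp
  have "real_of_int \<lfloor>s / \<tau>\<rfloor> \<le> s / \<tau>" by simp
  then have "real_of_int \<lfloor>s / \<tau>\<rfloor> * \<tau> \<le> s / \<tau> * \<tau>" using assms by (intro mult_right_mono) auto
  then show "real (nat \<lfloor>s / \<tau>\<rfloor>) * \<tau> \<le> s" unfolding e using assms by simp
  have "s / \<tau> < real_of_int \<lfloor>s / \<tau>\<rfloor> + 1" by simp
  then have "s / \<tau> * \<tau> < (real_of_int \<lfloor>s / \<tau>\<rfloor> + 1) * \<tau>" using assms by (intro mult_strict_right_mono) auto
  then have "s < (real_of_int \<lfloor>s / \<tau>\<rfloor> + 1) * \<tau>" using assms by simp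
  then show "s < real (nat \<lfloor>s / \<tau>\<rfloor>) * \<tau> + \<tau>" unfolding e by (simp add: algebra_simps)
qed

lemma nat_floor_mult: "\<tau> > 0 \<Longrightarrow> nat \<lfloor>real n * \<tau> / \<tau>\<rfloor> = n"
  by simp

lemma int_abs_bound:
  fixes f :: "real \<Rightarrow> real"
  assumes int: "f integrable_on {a..b}" and ab: "a \<le> b" and B: "\<And>x. x \<in> {a..b} \<Longrightarrow> norm (f x) \<le> B"
  shows "\<bar>integral {a..b} f\<bar> \<le> (b - a) * B"
proof -
  have Bx: "- B \<le> f x" "f x \<le> B" if "x \<in> {a..b}" for x using B[OF that] by (simp_all add: abs_le_iff)
  have "integral {a..b} f \<le> integral {a..b} (\<lambda>x. B)"
    by (rule integral_le[OF int]) (use Bx in auto)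
  moreover have "integral {a..b} (\<lambda>x. - B) \<le> integral {a..b} f"
    by (rule integral_le[OF _ int]) (use Bx in auto)
  ultimately show ?thesis using ab by (simp add: abs_le_iff algebra_simps)
qed

theorem mainTheorem14:
  fixes \<rho>0 :: "'a::euclidean_space measure"
    and \<phi> :: "'a measure \<Rightarrow> real"
    and grad :: "('a \<Rightarrow> 'a) \<Rightarrow> ('a \<Rightarrow> 'a)"
    and lam :: real
    and T :: "real set"
    and X :: "real \<Rightarrow> nat \<Rightarrow> ('a \<Rightarrow> 'a)"
    and Xlim :: "real \<Rightarrow> ('a \<Rightarrow> 'a)"
  assumes rho0: "\<rho>0 \<in> P2"
    and grad: "H_frechet_gradient \<rho>0 (lift \<phi> \<rho>0) grad"
    and convex: "H_lambda_convex \<rho>0 lam (lift \<phi> \<rho>0)"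
    and bdd: "bdd_below (lift \<phi> \<rho>0 ` Hsp \<rho>0)"
    and T_pos: "T \<subseteq> {0<..}"
    and T_lim: "0 islimpt T"
    and tau1: "\<And>\<tau>. \<tau> \<in> T \<Longrightarrow> lam / 2 + 1 / \<tau> > 0"
    and tau2: "\<And>\<tau>. \<tau> \<in> T \<Longrightarrow> lam < 0 \<Longrightarrow> \<bar>lam\<bar> * \<tau> < 1"
    and X0: "\<And>\<tau>. \<tau> \<in> T \<Longrightarrow> X \<tau> 0 \<in> Hsp \<rho>0"
    and step: "\<And>\<tau> n. \<tau> \<in> T \<Longrightarrow> X \<tau> (Suc n) \<in> Hsp \<rho>0 \<and>
                 (\<forall>\<xi>\<in>Hsp \<rho>0. scheme_obj \<rho>0 (lift \<phi> \<rho>0) grad \<tau> (X \<tau> n) (X \<tau> (Suc n))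
                                 \<le> scheme_obj \<rho>0 (lift \<phi> \<rho>0) grad \<tau> (X \<tau> n) \<xi>)"
    and X0_lim: "((\<lambda>\<tau>. Hnorm \<rho>0 (\<lambda>x. X \<tau> 0 x - x)) \<longlongrightarrow> 0) (at 0 within T)"
    and X0_grad: "bdd_above ((\<lambda>\<tau>. Hnorm \<rho>0 (grad (X \<tau> 0))) ` T)"
    and Xlim_H: "\<And>t. t \<ge> 0 \<Longrightarrow> Xlim t \<in> Hsp \<rho>0"
    and Xlim_lip: "\<And>S. \<exists>L. \<forall>s\<in>{0..S}. \<forall>t\<in>{0..S}.
                      Hnorm \<rho>0 (\<lambda>x. Xlim t x - Xlim s x) \<le> L * \<bar>t - s\<bar>"
    and conv: "\<And>S \<epsilon>. \<epsilon> > 0 \<Longrightarrow> \<forall>\<^sub>F \<tau> in at 0 within T. \<forall>t\<in>{0..S}.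
                  Hnorm \<rho>0 (\<lambda>x. X \<tau> (nat \<lfloor>t / \<tau>\<rfloor>) x - Xlim t x) \<le> \<epsilon>"
    and st: "0 \<le> s" "s \<le> t"
    and xi: "\<xi> \<in> Hsp \<rho>0"
  shows "((Hnorm \<rho>0 (\<lambda>x. Xlim t x - \<xi> x))\<^sup>2 - (Hnorm \<rho>0 (\<lambda>x. Xlim s x - \<xi> x))\<^sup>2) / 2
          + lam / 2 * integral {s..t} (\<lambda>a. (Hnorm \<rho>0 (\<lambda>x. Xlim a x - \<xi> x))\<^sup>2)
          + integral {s..t} (\<lambda>a. lift \<phi> \<rho>0 (Xlim a))
         \<le> (t - s) * lift \<phi> \<rho>0 \<xi>"
proof -
  define F where "F = lift \<phi> \<rho>0"
  have gr: "H_frechet_gradient \<rho>0 F grad" using grad unfolding F_def .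
  have cv: "H_lambda_convex \<rho>0 lam F" using convex unfolding F_def .
  define S where "S = t + 1"
  have S: "0 \<le> s" "s \<le> t" "t < S" "0 \<le> t" using st unfolding S_def by auto
  obtain L where lipL: "\<forall>a\<in>{0..S}. \<forall>b\<in>{0..S}. Hnorm \<rho>0 (\<lambda>x. Xlim b x - Xlim a x) \<le> L * \<bar>b - a\<bar>"
    using Xlim_lip[of S] by blast
  have lip: "\<And>a b. a \<in> {0..S} \<Longrightarrow> b \<in> {0..S} \<Longrightarrow> Hnorm \<rho>0 (\<lambda>x. Xlim b x - Xlim a x) \<le> L * \<bar>b - a\<bar>"
    using lipL by blast
  define L' where "L' = \<bar>L\<bar> + 1"
  have L'0: "L' > 0" unfolding L'_def by simp
  have lip': "\<And>a b. a \<in> {0..S} \<Longrightarrow> b \<in> {0..S} \<Longrightarrow> Hnorm \<rho>0 (\<lambda>x. Xlim b x - Xlim a x) \<le> L' * \<bar>b - a\<bar>"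
    unfolding L'_def by (rule lip_le[OF lip])
  have XH: "\<And>a. a \<in> {0..S} \<Longrightarrow> Xlim a \<in> Hsp \<rho>0" using Xlim_H by auto
  define Q where "Q = (\<lambda>\<eta>. (Hnorm \<rho>0 (\<lambda>x. \<eta> x - \<xi> x))\<^sup>2)"
  have hcF: "\<And>a. a \<in> {0..S} \<Longrightarrow> Hcont \<rho>0 F (Xlim a)" using frechet_Hcont[OF gr] XH by blast
  have hcQ: "\<And>a. a \<in> {0..S} \<Longrightarrow> Hcont \<rho>0 Q (Xlim a)" unfolding Q_def using sqdist_Hcont[OF _ xi] XH by blast
  have cF: "continuous_on {0..S} (\<lambda>a. F (Xlim a))" by (rule cont_curve[OF XH hcF lip])
  have cQ: "continuous_on {0..S} (\<lambda>a. Q (Xlim a))" by (rule cont_curve[OF XH hcQ lip])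
  define f where "f = (\<lambda>a. F (Xlim a) + lam / 2 * Q (Xlim a))"
  have cf: "continuous_on {0..S} f" unfolding f_def by (intro continuous_intros cF cQ)
  have intf: "f integrable_on {0..S}" by (rule integrable_continuous_interval[OF cf])
  have intF: "(\<lambda>a. F (Xlim a)) integrable_on {0..S}" by (rule integrable_continuous_interval[OF cF])
  have intQ: "(\<lambda>a. Q (Xlim a)) integrable_on {0..S}" by (rule integrable_continuous_interval[OF cQ])
  have intsub: "g integrable_on {a..b}" if "g integrable_on {0..S}" "0 \<le> a" "b \<le> S" for g :: "real \<Rightarrow> real" and a b
    by (rule integrable_subinterval_real[OF that(1)]) (use that in auto)
  obtain Bf where Bf0: "Bf \<ge> 0" and Bf: "\<And>a. a \<in> {0..S} \<Longrightarrow> norm (f a) \<le> Bf"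
    using continuous_on_compact_bound[OF compact_Icc cf] by blast
  obtain Cg where Cg: "\<And>\<tau>. \<tau> \<in> T \<Longrightarrow> Hnorm \<rho>0 (grad (X \<tau> 0)) \<le> Cg"
    using X0_grad unfolding bdd_above_def by auto
  define K1 where "K1 = exp (4 * \<bar>lam\<bar> * S) * Cg\<^sup>2 / 8"
  have K10: "K1 \<ge> 0" unfolding K1_def by simp
  define Z where "Z = 1 + 2 * Bf + \<bar>F \<xi>\<bar> + (t - s + 1) * (1 + \<bar>lam\<bar>) + K1"
  have Z1: "Z \<ge> 1"
  proof -
    have "(t - s + 1) * (1 + \<bar>lam\<bar>) \<ge> 0" using S by simp
    then show ?thesis unfolding Z_def using Bf0 K10 by simp
  qed
  have goal_eq: "lam / 2 * integral {s..t} (\<lambda>a. Q (Xlim a)) + integral {s..t} (\<lambda>a. F (Xlim a)) = integral {s..t} f"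
  proof -
    have iF: "(\<lambda>a. F (Xlim a)) integrable_on {s..t}" by (rule intsub[OF intF]) (use S in auto)
    have iQ: "(\<lambda>a. Q (Xlim a)) integrable_on {s..t}" by (rule intsub[OF intQ]) (use S in auto)
    have iQ': "(\<lambda>a. lam / 2 * Q (Xlim a)) integrable_on {s..t}" using integrable_on_cmult_left[OF iQ] by simp
    show ?thesis unfolding f_def integral_add[OF iF iQ'] integral_mult[OF iQ] by simp
  qed
  have main: "(Q (Xlim t) - Q (Xlim s)) / 2 + integral {s..t} f \<le> (t - s) * F \<xi>"
  proof (rule field_le_epsilon)
    fix e :: real assume e: "e > 0"
    define \<eta>0 where "\<eta>0 = e / Z"
    have \<eta>0: "\<eta>0 > 0" unfolding \<eta>0_def using e Z1 by simp
    have \<eta>0Z: "\<eta>0 * Z = e" unfolding \<eta>0_def using Z1 by simp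
    obtain \<delta>F where \<delta>F0: "\<delta>F > 0" and \<delta>F: "\<forall>b\<in>{0..S}. \<forall>\<eta>\<in>Hsp \<rho>0. Hnorm \<rho>0 (\<lambda>x. \<eta> x - Xlim b x) < \<delta>F \<longrightarrow> \<bar>F \<eta> - F (Xlim b)\<bar> < \<eta>0"
      using unif_curve[OF compact_Icc XH hcF lip \<eta>0] by blast
    obtain \<delta>Q where \<delta>Q0: "\<delta>Q > 0" and \<delta>Q: "\<forall>b\<in>{0..S}. \<forall>\<eta>\<in>Hsp \<rho>0. Hnorm \<rho>0 (\<lambda>x. \<eta> x - Xlim b x) < \<delta>Q \<longrightarrow> \<bar>Q \<eta> - Q (Xlim b)\<bar> < \<eta>0"
      using unif_curve[OF compact_Icc XH hcQ lip \<eta>0] by blast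
    define \<delta> where "\<delta> = min \<delta>F \<delta>Q"
    have \<delta>0: "\<delta> > 0" unfolding \<delta>_def using \<delta>F0 \<delta>Q0 by simp
    define \<epsilon>1 where "\<epsilon>1 = \<delta> / 3"
    have \<epsilon>10: "\<epsilon>1 > 0" unfolding \<epsilon>1_def using \<delta>0 by simp
    have "\<forall>\<^sub>F \<tau> in at 0 within T. \<forall>a\<in>{0..S}. Hnorm \<rho>0 (\<lambda>x. X \<tau> (nat \<lfloor>a / \<tau>\<rfloor>) x - Xlim a x) \<le> \<epsilon>1"
      using conv \<epsilon>10 by blast
    then obtain d where d0: "d > 0" and dconv: "\<forall>\<tau>\<in>T. \<tau> \<noteq> 0 \<and> dist \<tau> 0 < d \<longrightarrow>
        (\<forall>a\<in>{0..S}. Hnorm \<rho>0 (\<lambda>x. X \<tau> (nat \<lfloor>a / \<tau>\<rfloor>) x - Xlim a x) \<le> \<epsilon>1)"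
      unfolding eventually_at by blast
    define r where "r = min d (min \<eta>0 (min 1 (min (\<delta> / (3 * L')) (1 / (2 * \<bar>lam\<bar> + 1)))))"
    have r0: "r > 0" unfolding r_def using d0 \<eta>0 \<delta>0 L'0 by (simp add: add_nonneg_pos)
    obtain \<tau> where \<tau>T: "\<tau> \<in> T" and \<tau>ne: "\<tau> \<noteq> 0" and \<tau>r: "dist \<tau> 0 < r"
      using T_lim r0 unfolding islimpt_approachable by blast
    have \<tau>0: "\<tau> > 0" using T_pos \<tau>T by auto
    have \<tau>r': "\<tau> < r" using \<tau>r \<tau>0 by simp
    have \<tau>d: "\<tau> < d" "\<tau> \<le> \<eta>0" "\<tau> \<le> 1" "\<tau> \<le> \<delta> / (3 * L')" "\<tau> \<le> 1 / (2 * \<bar>lam\<bar> + 1)"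
      using \<tau>r' unfolding r_def by auto
    have closeX: "\<forall>a\<in>{0..S}. Hnorm \<rho>0 (\<lambda>x. X \<tau> (nat \<lfloor>a / \<tau>\<rfloor>) x - Xlim a x) \<le> \<epsilon>1"
      using dconv \<tau>T \<tau>ne \<tau>d(1) \<tau>0 by auto
    have XnH: "X \<tau> n \<in> Hsp \<rho>0" for n
    proof (cases n)
      case 0 then show ?thesis using X0[OF \<tau>T] by simp
    next
      case (Suc k) then show ?thesis using step[OF \<tau>T, of k] by simp
    qed
    have mn: "\<forall>\<xi>\<in>Hsp \<rho>0. scheme_obj \<rho>0 F grad \<tau> (X \<tau> n) (X \<tau> (Suc n)) \<le> scheme_obj \<rho>0 F grad \<tau> (X \<tau> n) \<xi>" for n
      using step[OF \<tau>T, of n] unfolding F_def by blast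
    define p where "p n = Q (X \<tau> n)" for n
    define an where "an n = (Hnorm \<rho>0 (grad (X \<tau> n)))\<^sup>2" for n
    have stepI: "(p (Suc n) - p n) / (2 * \<tau>) + F (X \<tau> (Suc n)) / 2 + F (X \<tau> n) / 2 + lam / 4 * (p n + p (Suc n))
        + \<tau> / 8 * (an (Suc n) - an n) \<le> F \<xi>" for n
      using step_facts(1)[OF gr cv \<tau>0 XnH XnH xi mn] unfolding p_def Q_def an_def .
    have clam: "\<bar>lam\<bar> * \<tau> \<le> 1 / 2"
    proof -
      have "\<bar>lam\<bar> * \<tau> \<le> \<bar>lam\<bar> * (1 / (2 * \<bar>lam\<bar> + 1))" using \<tau>d(5) by (intro mult_left_mono) auto
      also have "\<dots> \<le> 1 / 2" by (simp add: field_simps)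
      finally show ?thesis .
    qed
    have growth: "an (Suc n) \<le> (1 + 4 * (\<bar>lam\<bar> * \<tau>)) * an n" for n
    proof (rule growth_real)
      show "an (Suc n) - an n \<le> \<bar>lam\<bar> * \<tau> * (an n + an (Suc n))"
        using step_facts(2)[OF gr cv \<tau>0 XnH XnH xi mn] unfolding an_def .
    qed (use clam \<tau>0 in \<open>auto simp: an_def\<close>)
    have an0: "an 0 \<le> Cg\<^sup>2" unfolding an_def using Cg[OF \<tau>T] Hnorm_nonneg by (intro power_mono) auto
    have anbound: "an n \<le> exp (4 * (\<bar>lam\<bar> * \<tau>) * real n) * Cg\<^sup>2" for n
      by (rule growth_pow[OF growth _ an0]) (use \<tau>0 in \<open>auto simp: an_def\<close>)
    define m where "m = nat \<lfloor>s / \<tau>\<rfloor>"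
    define M where "M = nat \<lfloor>t / \<tau>\<rfloor>"
    have m1: "real m * \<tau> \<le> s" and m2: "s < real m * \<tau> + \<tau>" unfolding m_def using floor_facts[OF S(1) \<tau>0] by auto
    have M1: "real M * \<tau> \<le> t" and M2: "t < real M * \<tau> + \<tau>" unfolding M_def using floor_facts[OF S(4) \<tau>0] by auto
    have mM: "m \<le> M" unfolding m_def M_def using st \<tau>0 by (intro nat_mono floor_mono divide_right_mono) auto
    have grid: "Hnorm \<rho>0 (\<lambda>x. X \<tau> n x - Xlim (real n * \<tau>) x) \<le> \<epsilon>1" if "real n * \<tau> \<le> S" for n
    proof -
      have "real n * \<tau> \<in> {0..S}" using that \<tau>0 by simp
      then show ?thesis using closeX \<tau>0 by fastforce
    qed
    have near: "Hnorm \<rho>0 (\<lambda>x. X \<tau> n x - Xlim a x) < \<delta>"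
      if "real n * \<tau> \<le> S" "a \<in> {0..S}" "\<bar>a - real n * \<tau>\<bar> \<le> \<tau>" for n a
    proof -
      have nS: "real n * \<tau> \<in> {0..S}" using that \<tau>0 by simp
      have "Hnorm \<rho>0 (\<lambda>x. X \<tau> n x - Xlim a x)
          \<le> Hnorm \<rho>0 (\<lambda>x. X \<tau> n x - Xlim (real n * \<tau>) x) + Hnorm \<rho>0 (\<lambda>x. Xlim (real n * \<tau>) x - Xlim a x)"
        by (rule Hnorm_triangle[OF XnH XH[OF nS] XH[OF that(2)]])
      also have "\<dots> \<le> \<epsilon>1 + L' * \<bar>real n * \<tau> - a\<bar>"
        using grid[OF that(1)] lip'[OF that(2) nS] by linarith
      also have "\<dots> \<le> \<epsilon>1 + L' * \<tau>"
        using that(3) L'0 by (simp add: abs_minus_commute mult_left_mono)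
      also have "\<dots> < \<delta>"
      proof -
        have "L' * \<tau> \<le> L' * (\<delta> / (3 * L'))" using \<tau>d(4) L'0 by (intro mult_left_mono) auto
        also have "\<dots> = \<delta> / 3" using L'0 by simp
        finally show ?thesis unfolding \<epsilon>1_def using \<delta>0 by linarith
      qed
      finally show ?thesis .
    qed
    have nearF: "\<bar>F (X \<tau> n) - F (Xlim a)\<bar> < \<eta>0" and nearQ: "\<bar>p n - Q (Xlim a)\<bar> < \<eta>0"
      if "real n * \<tau> \<le> S" "a \<in> {0..S}" "\<bar>a - real n * \<tau>\<bar> \<le> \<tau>" for n a
    proof -
      have h: "Hnorm \<rho>0 (\<lambda>x. X \<tau> n x - Xlim a x) < \<delta>" by (rule near[OF that])
      show "\<bar>F (X \<tau> n) - F (Xlim a)\<bar> < \<eta>0" using \<delta>F that(2) XnH h unfolding \<delta>_def by auto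
      show "\<bar>p n - Q (Xlim a)\<bar> < \<eta>0" using \<delta>Q that(2) XnH h unfolding \<delta>_def p_def by auto
    qed
    define E where "E = \<eta>0 + \<bar>lam\<bar> / 2 * \<eta>0"
    have stepInt: "integral {real n * \<tau> .. real (Suc n) * \<tau>} f
        \<le> \<tau> * F \<xi> - (p (Suc n) - p n) / 2 - \<tau>\<^sup>2 / 8 * (an (Suc n) - an n) + \<tau> * E"
      if "m \<le> n" "n < m + (M - m)" for n
    proof -
      have nM: "Suc n \<le> M" using that mM by simp
      have "real (Suc n) * \<tau> \<le> real M * \<tau>" using nM \<tau>0 by (intro mult_right_mono) auto
      then have SnS: "real (Suc n) * \<tau> \<le> S" using M1 S by linarith
      have nS: "real n * \<tau> \<le> S" using SnS \<tau>0 by (simp add: algebra_simps)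
      define cst where "cst = F (X \<tau> (Suc n)) / 2 + F (X \<tau> n) / 2 + lam / 4 * (p n + p (Suc n)) + E"
      have pt: "f a \<le> cst" if a: "a \<in> {real n * \<tau> .. real (Suc n) * \<tau>}" for a
      proof -
        have "0 \<le> real n * \<tau>" using \<tau>0 by simp
        then have aS: "a \<in> {0..S}" using a SnS by auto
        have d1: "\<bar>a - real n * \<tau>\<bar> \<le> \<tau>" using a by (auto simp: algebra_simps)
        have d2: "\<bar>a - real (Suc n) * \<tau>\<bar> \<le> \<tau>" using a by (auto simp: algebra_simps)
        have F1: "\<bar>F (X \<tau> n) - F (Xlim a)\<bar> < \<eta>0" by (rule nearF[OF nS aS d1])
        have F2: "\<bar>F (X \<tau> (Suc n)) - F (Xlim a)\<bar> < \<eta>0" by (rule nearF[OF SnS aS d2])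
        have Q1: "\<bar>p n - Q (Xlim a)\<bar> < \<eta>0" by (rule nearQ[OF nS aS d1])
        have Q2: "\<bar>p (Suc n) - Q (Xlim a)\<bar> < \<eta>0" by (rule nearQ[OF SnS aS d2])
        have l1: "lam * (Q (Xlim a) - p n) \<le> \<bar>lam\<bar> * \<eta>0"
        proof -
          have "lam * (Q (Xlim a) - p n) \<le> \<bar>lam\<bar> * \<bar>Q (Xlim a) - p n\<bar>" by (metis abs_ge_self abs_mult)
          also have "\<dots> \<le> \<bar>lam\<bar> * \<eta>0" using Q1 by (intro mult_left_mono) auto
          finally show ?thesis .
        qed
        have l2: "lam * (Q (Xlim a) - p (Suc n)) \<le> \<bar>lam\<bar> * \<eta>0"
        proof -
          have "lam * (Q (Xlim a) - p (Suc n)) \<le> \<bar>lam\<bar> * \<bar>Q (Xlim a) - p (Suc n)\<bar>" by (metis abs_ge_self abs_mult)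
          also have "\<dots> \<le> \<bar>lam\<bar> * \<eta>0" using Q2 by (intro mult_left_mono) auto
          finally show ?thesis .
        qed
        have "lam / 2 * Q (Xlim a) = lam / 4 * (p n + p (Suc n)) + (lam * (Q (Xlim a) - p n)) / 4 + (lam * (Q (Xlim a) - p (Suc n))) / 4"
          by (simp add: field_simps)
        then show ?thesis unfolding f_def cst_def E_def using F1 F2 l1 l2 by linarith
      qed
      have le0: "real n * \<tau> \<le> real (Suc n) * \<tau>" using \<tau>0 by (intro mult_right_mono) auto
      have "integral {real n * \<tau> .. real (Suc n) * \<tau>} f \<le> integral {real n * \<tau> .. real (Suc n) * \<tau>} (\<lambda>a. cst)"
        by (rule integral_le[OF intsub[OF intf] _ pt]) (use SnS \<tau>0 in auto)
      also have "\<dots> = \<tau> * cst" using le0 by (simp add: algebra_simps)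
      also have "\<dots> \<le> \<tau> * F \<xi> - (p (Suc n) - p n) / 2 - \<tau>\<^sup>2 / 8 * (an (Suc n) - an n) + \<tau> * E"
      proof -
        have "\<tau> * ((p (Suc n) - p n) / (2 * \<tau>) + F (X \<tau> (Suc n)) / 2 + F (X \<tau> n) / 2 + lam / 4 * (p n + p (Suc n))
            + \<tau> / 8 * (an (Suc n) - an n)) \<le> \<tau> * F \<xi>"
          using stepI[of n] \<tau>0 by (intro mult_left_mono) auto
        moreover have "\<tau> * ((p (Suc n) - p n) / (2 * \<tau>) + F (X \<tau> (Suc n)) / 2 + F (X \<tau> n) / 2 + lam / 4 * (p n + p (Suc n))
            + \<tau> / 8 * (an (Suc n) - an n)) = (p (Suc n) - p n) / 2 + \<tau> * (cst - E) + \<tau>\<^sup>2 / 8 * (an (Suc n) - an n)"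
          unfolding cst_def using \<tau>0 by (simp add: field_simps power2_eq_square)
        ultimately show ?thesis by (simp add: algebra_simps)
      qed
      finally show ?thesis .
    qed
    have intm: "f integrable_on {real m * \<tau> .. real (m + (M - m)) * \<tau>}"
      by (rule intsub[OF intf]) (use mM M1 S \<tau>0 in auto)
    have sumI: "integral {real m * \<tau> .. real M * \<tau>} f
        \<le> real (M - m) * \<tau> * F \<xi> - (p M - p m) / 2 - \<tau>\<^sup>2 / 8 * (an M - an m) + real (M - m) * \<tau> * E"
      using sum_integral[OF \<tau>0 intm stepInt] mM by simp
    have m0: "0 \<le> real m * \<tau>" using \<tau>0 by simp
    have mMle: "real m * \<tau> \<le> real M * \<tau>" using mM \<tau>0 by (intro mult_right_mono) auto
    have intmt: "f integrable_on {real m * \<tau> .. t}" by (rule intsub[OF intf m0]) (use S in auto)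
    have split: "integral {s..t} f = integral {real m * \<tau> .. real M * \<tau>} f - integral {real m * \<tau> .. s} f + integral {real M * \<tau> .. t} f"
    proof -
      have "integral {real m * \<tau> .. s} f + integral {s..t} f = integral {real m * \<tau> .. t} f"
        by (rule Henstock_Kurzweil_Integration.integral_combine[OF m1 S(2) intmt])
      moreover have "integral {real m * \<tau> .. real M * \<tau>} f + integral {real M * \<tau> .. t} f = integral {real m * \<tau> .. t} f"
        by (rule Henstock_Kurzweil_Integration.integral_combine[OF mMle M1 intmt])
      ultimately show ?thesis by linarith
    qed
    have Bsub: "norm (f x) \<le> Bf" if "0 \<le> a" "b \<le> S" "x \<in> {a..b}" for a b x
      using Bf[of x] that by auto
    have b1: "\<bar>integral {real m * \<tau> .. s} f\<bar> \<le> \<tau> * Bf"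
    proof -
      have "\<bar>integral {real m * \<tau> .. s} f\<bar> \<le> (s - real m * \<tau>) * Bf"
        by (rule int_abs_bound[OF intsub[OF intf m0] m1 Bsub[OF m0]]) (use S in auto)
      also have "\<dots> \<le> \<tau> * Bf" using m2 Bf0 by (intro mult_right_mono) auto
      finally show ?thesis .
    qed
    have b2: "\<bar>integral {real M * \<tau> .. t} f\<bar> \<le> \<tau> * Bf"
    proof -
      have M0: "0 \<le> real M * \<tau>" using \<tau>0 by simp
      have "\<bar>integral {real M * \<tau> .. t} f\<bar> \<le> (t - real M * \<tau>) * Bf"
        by (rule int_abs_bound[OF intsub[OF intf M0] M1]) (use Bf S M0 in auto)
      also have "\<dots> \<le> \<tau> * Bf" using M2 Bf0 by (intro mult_right_mono) auto
      finally show ?thesis .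
    qed
    have endM: "\<bar>p M - Q (Xlim t)\<bar> < \<eta>0"
    proof -
      have "Hnorm \<rho>0 (\<lambda>x. X \<tau> M x - Xlim t x) \<le> \<epsilon>1" using closeX S unfolding M_def by auto
      then have "Hnorm \<rho>0 (\<lambda>x. X \<tau> M x - Xlim t x) < \<delta>Q" unfolding \<epsilon>1_def \<delta>_def using \<delta>Q0 \<delta>F0 by linarith
      then show ?thesis using \<delta>Q S XnH unfolding p_def by auto
    qed
    have endm: "\<bar>p m - Q (Xlim s)\<bar> < \<eta>0"
    proof -
      have "Hnorm \<rho>0 (\<lambda>x. X \<tau> m x - Xlim s x) \<le> \<epsilon>1" using closeX S unfolding m_def by auto
      then have "Hnorm \<rho>0 (\<lambda>x. X \<tau> m x - Xlim s x) < \<delta>Q" unfolding \<epsilon>1_def \<delta>_def using \<delta>Q0 \<delta>F0 by linarith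
      then show ?thesis using \<delta>Q S XnH unfolding p_def by auto
    qed
    have anm: "\<tau>\<^sup>2 / 8 * (an m - an M) \<le> \<eta>0 * K1"
    proof -
      have aM: "an M \<ge> 0" unfolding an_def by simp
      have "4 * (\<bar>lam\<bar> * \<tau>) * real m = 4 * \<bar>lam\<bar> * (real m * \<tau>)" by (simp add: algebra_simps)
      also have "\<dots> \<le> 4 * \<bar>lam\<bar> * S" using m1 S by (intro mult_left_mono) auto
      finally have "exp (4 * (\<bar>lam\<bar> * \<tau>) * real m) \<le> exp (4 * \<bar>lam\<bar> * S)" by simp
      then have "an m \<le> exp (4 * \<bar>lam\<bar> * S) * Cg\<^sup>2" using anbound[of m]
        by (meson mult_right_mono order_trans zero_le_power2)
      then have "an m - an M \<le> 8 * K1" unfolding K1_def using aM by simp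
      then have "\<tau>\<^sup>2 / 8 * (an m - an M) \<le> \<tau>\<^sup>2 / 8 * (8 * K1)" by (intro mult_left_mono) auto
      also have "\<dots> = \<tau> * (\<tau> * K1)" by (simp add: power2_eq_square)
      also have "\<dots> \<le> 1 * (\<tau> * K1)" using \<tau>d(3) \<tau>0 K10 by (intro mult_right_mono) auto
      also have "\<dots> \<le> \<eta>0 * K1" using \<tau>d(2) K10 by (simp add: mult_right_mono)
      finally show ?thesis .
    qed
    have kt1: "real (M - m) * \<tau> \<le> t - s + \<tau>" and kt2: "t - s - \<tau> \<le> real (M - m) * \<tau>"
      using mM m1 m2 M1 M2 by (simp_all add: of_nat_diff left_diff_distrib)
    have kF: "real (M - m) * \<tau> * F \<xi> \<le> (t - s) * F \<xi> + \<eta>0 * \<bar>F \<xi>\<bar>"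
    proof -
      have "\<bar>real (M - m) * \<tau> - (t - s)\<bar> \<le> \<tau>" using kt1 kt2 by linarith
      then have "(real (M - m) * \<tau> - (t - s)) * F \<xi> \<le> \<tau> * \<bar>F \<xi>\<bar>"
        by (metis abs_ge_self abs_mult mult_right_mono abs_ge_zero order_trans)
      also have "\<dots> \<le> \<eta>0 * \<bar>F \<xi>\<bar>" using \<tau>d(2) by (intro mult_right_mono) auto
      finally show ?thesis by (simp add: algebra_simps)
    qed
    have E0: "E \<ge> 0" unfolding E_def using \<eta>0 by simp
    have kE: "real (M - m) * \<tau> * E \<le> (t - s + 1) * (1 + \<bar>lam\<bar>) * \<eta>0"
    proof -
      have "real (M - m) * \<tau> * E \<le> (t - s + 1) * E" using kt1 \<tau>d(3) E0 by (intro mult_right_mono) auto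
      also have "E \<le> (1 + \<bar>lam\<bar>) * \<eta>0" unfolding E_def using \<eta>0 by (simp add: algebra_simps)
      then have "(t - s + 1) * E \<le> (t - s + 1) * ((1 + \<bar>lam\<bar>) * \<eta>0)" using S by (intro mult_left_mono) auto
      finally show ?thesis by (simp add: algebra_simps)
    qed
    have tB: "\<tau> * Bf \<le> \<eta>0 * Bf" using \<tau>d(2) Bf0 by (intro mult_right_mono) auto
    have "(Q (Xlim t) - Q (Xlim s)) / 2 + integral {s..t} f
        \<le> (p M - p m) / 2 + \<eta>0 + integral {real m * \<tau> .. real M * \<tau>} f + 2 * (\<tau> * Bf)"
      using split b1 b2 endM endm by (simp only: diff_divide_distrib; linarith)
    also have "\<dots> \<le> (t - s) * F \<xi> + \<eta>0 * Z"
    proof -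
      have ZZ: "\<eta>0 * Z = \<eta>0 + 2 * (\<eta>0 * Bf) + \<eta>0 * \<bar>F \<xi>\<bar> + (t - s + 1) * (1 + \<bar>lam\<bar>) * \<eta>0 + \<eta>0 * K1"
        unfolding Z_def by (simp add: algebra_simps)
      have "- (\<tau>\<^sup>2 / 8 * (an M - an m)) = \<tau>\<^sup>2 / 8 * (an m - an M)" by (simp add: right_diff_distrib)
      then have anm': "- (\<tau>\<^sup>2 / 8 * (an M - an m)) \<le> \<eta>0 * K1" using anm by linarith
      show ?thesis using sumI anm' kF kE tB ZZ by linarith
    qed
    finally show "(Q (Xlim t) - Q (Xlim s)) / 2 + integral {s..t} f \<le> (t - s) * F \<xi> + e" using \<eta>0Z by simp
  qed
  have "((Q (Xlim t) - Q (Xlim s)) / 2 + lam / 2 * integral {s..t} (\<lambda>a. Q (Xlim a)) + integral {s..t} (\<lambda>a. F (Xlim a)))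
      \<le> (t - s) * F \<xi>"
    using main goal_eq by linarith
  then show ?thesis unfolding Q_def F_def .
qed

end
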